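(* Fix $z\in M$ and $E\in H(M)$ such that the $\mathbb R$-orbit of $z$ meets $H^{-1}(E)$ at $z_E$, and let $\tau(z,E)\in\mathbb R$ with $e^{\tau(z,E)}\cdot z_E=z$. Then \[ b(z,E)=\varphi(z)+u(2E;z),\qquad \partial_E b(z,E)=-2\tau(z,E),\qquad \partial_E^2 b(z,E)=\frac{4}{\partial_\rho^2\varphi(z_E)}. \] Hence $E\mapsto b(z,E)$ is strictly convex with minimum value $0$ attained at $E=H(z)$.
   Context: $M$ is a compact Kähler manifold with positive Hermitian holomorphic line bundle $(L,h)$; a holomorphic Hamiltonian $S^1$-action generated by $H:M\to\mathbb R$ (lifting to $L$, preserving $h$) extends to a holomorphic $\mathbb C^*$-action $z\mapsto e^{\rho+i\theta}\cdot z$, the $\mathbb R$-part $e^\rho\cdot z$ moving along the gradient of $H$. $\partial_\rho f(z)=\frac{d}{d\rho}|_{\rho=0}f(e^\rho\cdot z)$. $\varphi$ is the $S^1$-invariant local Kähler potential $\|e_L\|_h^2=e^{-\varphi}$ of a local $\mathbb C^*$-invariant holomorphic frame, so that $H=\frac12\partial_\rho\varphi$ and $\rho\mapsto\varphi(e^\rho\cdot z)$ is smooth and strictly convex. The leafwise symplectic potential is the Legendre transform $u(I;z)=\sup_{\rho\in\mathbb R}\bigl(I\rho-\varphi(e^\rho\cdot z)\bigr)$. $b(z,E)=2\int_0^{\tau(z,E)}\bigl(H(e^\sigma\cdot z_E)-E\bigr)d\sigma$. *)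

theory Defs
  imports "HOL-Analysis.Analysis"
begin

text \<open>Abstract setting. \<open>act \<rho> w\<close> is the real part \<open>e\<^sup>\<rho> \<cdot> w\<close> of the holomorphic
  C*-action on the points of M (type 'm); \<open>phi\<close> is the S1-invariant local Kaehler
  potential, \<open>H\<close> the Hamiltonian.\<close>

definition rho_deriv :: "(real \<Rightarrow> 'm \<Rightarrow> 'm) \<Rightarrow> ('m \<Rightarrow> real) \<Rightarrow> 'm \<Rightarrow> real" where
  "rho_deriv act f w = deriv (\<lambda>r. f (act r w)) 0"

definition rho_deriv2 :: "(real \<Rightarrow> 'm \<Rightarrow> 'm) \<Rightarrow> ('m \<Rightarrow> real) \<Rightarrow> 'm \<Rightarrow> real" where
  "rho_deriv2 act f w = deriv (deriv (\<lambda>r. f (act r w))) 0"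

definition sympot :: "(real \<Rightarrow> 'm \<Rightarrow> 'm) \<Rightarrow> ('m \<Rightarrow> real) \<Rightarrow> real \<Rightarrow> 'm \<Rightarrow> real" where
  "sympot act phi I z = (SUP \<rho>. I * \<rho> - phi (act \<rho> z))"

text \<open>\<open>tau(z,E)\<close>: the time with \<open>e\<^sup>\<tau> \<cdot> z_E = z\<close>, i.e. \<open>z_E = e\<^sup>-\<^sup>\<tau> \<cdot> z\<close> and \<open>H z_E = E\<close>.\<close>
definition tau :: "(real \<Rightarrow> 'm \<Rightarrow> 'm) \<Rightarrow> ('m \<Rightarrow> real) \<Rightarrow> 'm \<Rightarrow> real \<Rightarrow> real" where
  "tau act H z E = (THE t. H (act (- t) z) = E)"

definition bfun :: "(real \<Rightarrow> 'm \<Rightarrow> 'm) \<Rightarrow> ('m \<Rightarrow> real) \<Rightarrow> 'm \<Rightarrow> real \<Rightarrow> real" where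
  "bfun act H z E =
     (let t = tau act H z E; zE = act (- t) z
      in 2 * (LBINT \<sigma>=ereal 0..ereal t. H (act \<sigma> zE) - E))"

definition strict_convex_on :: "real set \<Rightarrow> (real \<Rightarrow> real) \<Rightarrow> bool" where
  "strict_convex_on S f \<longleftrightarrow>
     (\<forall>x\<in>S. \<forall>y\<in>S. x \<noteq> y \<longrightarrow> (\<forall>t. 0 < t \<and> t < 1 \<longrightarrow>
        f ((1 - t) * x + t * y) < (1 - t) * f x + t * f y))"

end

theory Submission
  imports Defs
begin

lemma strict_cvx_aux:
  fixes f F :: "real \<Rightarrow> real"
  assumes d1: "\<And>r. (f has_real_derivative F r) (at r)"
    and mono: "\<And>a b. a < b \<Longrightarrow> F a < F b"
    and ne: "a \<noteq> c"
  shows "f a > f c + F c * (a - c)"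
proof (cases "c < a")
  case True
  obtain x where x: "c < x" "x < a" "f a - f c = (a - c) * F x"
    using MVT2[OF True, of f F] d1 by blast
  have "F c < F x" using mono x by auto
  then have "(a - c) * F c < (a - c) * F x" using True by simp
  then show ?thesis using x by (simp add: algebra_simps)
next
  case False
  then have ac: "a < c" using ne by simp
  obtain x where x: "a < x" "x < c" "f c - f a = (c - a) * F x"
    using MVT2[OF ac, of f F] d1 by blast
  have "F x < F c" using mono x by auto
  then have "(c - a) * F x < (c - a) * F c" using ac by simp
  then show ?thesis using x by (simp add: algebra_simps)
qed

lemma cvx_aux:
  fixes f F :: "real \<Rightarrow> real"
  assumes d1: "\<And>r. (f has_real_derivative F r) (at r)"
    and mono: "\<And>a b. a < b \<Longrightarrow> F a < F b"
  shows "f a \<ge> f c + F c * (a - c)"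
  using strict_cvx_aux[OF d1 mono, of a c] by (cases "a = c") auto

theorem lemma2p5:
  fixes act :: "real \<Rightarrow> 'm \<Rightarrow> 'm" and phi H :: "'m \<Rightarrow> real"
    and z zE :: 'm and E \<tau> :: real
  assumes act_0: "\<And>w. act 0 w = w"
    and act_add: "\<And>s t w. act (s + t) w = act s (act t w)"
    and phi_C2: "\<And>w r. ((\<lambda>\<rho>. phi (act \<rho> w)) has_real_derivative
                          deriv (\<lambda>\<rho>. phi (act \<rho> w)) r) (at r)
                   \<and> (deriv (\<lambda>\<rho>. phi (act \<rho> w)) has_real_derivative
                          deriv (deriv (\<lambda>\<rho>. phi (act \<rho> w))) r) (at r)"
    and phi_C2_cont: "\<And>w. continuous_on UNIV (deriv (deriv (\<lambda>\<rho>. phi (act \<rho> w))))"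
    and phi_strict: "\<And>w r. deriv (deriv (\<lambda>\<rho>. phi (act \<rho> w))) r > 0"
    and H_phi: "\<And>w. H w = rho_deriv act phi w / 2"
    and E_range: "E \<in> range H"
    and zE_orbit: "\<exists>s. zE = act s z"
    and zE_level: "H zE = E"
    and tau_def: "act \<tau> zE = z"
  shows "bfun act H z E = phi z + sympot act phi (2 * E) z
         \<and> ((\<lambda>e. bfun act H z e) has_real_derivative (- 2 * \<tau>)) (at E)
         \<and> ((\<lambda>e. deriv (\<lambda>e'. bfun act H z e') e) has_real_derivative
               (4 / rho_deriv2 act phi zE)) (at E)
         \<and> strict_convex_on (range (\<lambda>s. H (act s z))) (\<lambda>e. bfun act H z e)
         \<and> bfun act H z (H z) = 0
         \<and> (\<forall>e\<in>range (\<lambda>s. H (act s z)). bfun act H z e \<ge> 0)"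
proof -
  define f where "f = (\<lambda>\<rho>. phi (act \<rho> z))"
  define F where "F = deriv f"
  define F2 where "F2 = deriv F"
  have d1: "\<And>r. (f has_real_derivative F r) (at r)"
    using phi_C2 unfolding f_def F_def by blast
  have d2: "\<And>r. (F has_real_derivative F2 r) (at r)"
    using phi_C2 unfolding f_def F_def F2_def by blast
  have pos: "\<And>r. F2 r > 0" using phi_strict unfolding f_def F_def F2_def by blast
  have mono: "\<And>a b. a < b \<Longrightarrow> F a < F b"
  proof -
    fix a b :: real assume "a < b"
    then show "F a < F b"
      by (rule DERIV_pos_imp_increasing[of a b F]) (use d2 pos in blast)
  qed
  have Finj: "\<And>a b. F a = F b \<Longrightarrow> a = b"
    by (metis linorder_neqE_linordered_idom mono order_less_irrefl)
  have contF: "\<And>x. isCont F x" using d2 DERIV_isCont by blast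
  have shift: "\<And>s. deriv (\<lambda>r. phi (act r (act s z))) = (\<lambda>r. F (r + s))"
  proof
    fix s r
    have "(\<lambda>r. phi (act r (act s z))) = (\<lambda>r. f (r + s))"
      by (simp add: f_def act_add)
    moreover have "((\<lambda>r. f (r + s)) has_real_derivative F (r + s)) (at r)"
      using d1 DERIV_shift by blast
    ultimately show "deriv (\<lambda>r. phi (act r (act s z))) r = F (r + s)"
      by (simp add: DERIV_imp_deriv)
  qed
  have shift2: "\<And>s. deriv (deriv (\<lambda>r. phi (act r (act s z)))) 0 = F2 s"
  proof -
    fix s
    have "((\<lambda>r. F (r + s)) has_real_derivative F2 (0 + s)) (at 0)"
      using d2 DERIV_shift by blast
    then show "deriv (deriv (\<lambda>r. phi (act r (act s z)))) 0 = F2 s"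
      by (simp add: shift DERIV_imp_deriv)
  qed
  have Hs: "\<And>s. H (act s z) = F s / 2"
    using shift by (simp add: H_phi rho_deriv_def)
  define g where "g = (\<lambda>y. THE s. F s = y)"
  have gF: "\<And>s. g (F s) = s" unfolding g_def using Finj by blast
  have rngF: "\<And>y a b. F a < y \<Longrightarrow> y < F b \<Longrightarrow> y \<in> range F"
  proof -
    fix y a b assume "F a < y" "y < F b"
    moreover then have "a \<le> b" using mono by (meson le_less_linear less_trans order_less_asym)
    ultimately obtain x where "F x = y" using IVT[of F a y b] contF by fastforce
    then show "y \<in> range F" by blast
  qed
  have Fg: "\<And>y. y \<in> range F \<Longrightarrow> F (g y) = y" using gF by auto
  have gcont: "\<And>s. isCont g (F s)"
    by (rule isCont_inverse_function[where d=1]) (auto simp: gF contF)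
  have gder: "\<And>s. (g has_real_derivative inverse (F2 s)) (at (F s))"
  proof -
    fix s
    show "(g has_real_derivative inverse (F2 s)) (at (F s))"
      apply (rule DERIV_inverse_function[where a="F (s - 1)" and b="F (s + 1)"])
      using d2[of s] pos[of s] mono[of "s - 1" s] mono[of s "s + 1"] gcont[of s]
      by (auto simp: gF intro!: Fg rngF)
  qed
  have gd2: "\<And>s. ((\<lambda>e. g (2 * e)) has_real_derivative inverse (F2 s) * 2) (at (F s / 2))"
  proof -
    fix s
    have a: "(g has_real_derivative inverse (F2 s)) (at (2 * (F s / 2)))" using gder[of s] by simp
    have b: "((\<lambda>e. 2 * e) has_real_derivative 2) (at (F s / 2))"
      by (auto intro!: derivative_eq_intros)
    show "?thesis s" using DERIV_chain2[OF a b] by simp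
  qed
  have integ: "\<And>t s c. (LBINT \<sigma>=ereal 0..ereal t. F (\<sigma> + s) / 2 - c)
                = (f (t + s) / 2 - c * t) - f s / 2"
  proof -
    fix t s c :: real
    have "(LBINT \<sigma>=ereal 0..ereal t. F (\<sigma> + s) / 2 - c) = (f (t + s) / 2 - c * t) - (f (0 + s) / 2 - c * 0)"
    proof (rule interval_integral_FTC_finite[where F="\<lambda>\<sigma>. f (\<sigma> + s) / 2 - c * \<sigma>"])
      show "continuous_on {min 0 t..max 0 t} (\<lambda>\<sigma>. F (\<sigma> + s) / 2 - c)"
        by (intro continuous_at_imp_continuous_on ballI continuous_intros
            isCont_o2[OF _ contF]) auto
    next
      fix x
      have "((\<lambda>\<sigma>. f (\<sigma> + s) / 2 - c * \<sigma>) has_real_derivative F (x + s) / 2 - c) (at x)"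
        using d1[of "x + s"] DERIV_shift[of f "F (x + s)" x s]
        by (auto intro!: derivative_eq_intros)
      then show "((\<lambda>\<sigma>. f (\<sigma> + s) / 2 - c * \<sigma>) has_vector_derivative F (x + s) / 2 - c)
          (at x within {min 0 t..max 0 t})"
        using has_real_derivative_iff_has_vector_derivative has_vector_derivative_at_within by blast
    qed
    then show "(LBINT \<sigma>=ereal 0..ereal t. F (\<sigma> + s) / 2 - c) = (f (t + s) / 2 - c * t) - f s / 2"
      by (simp add: zero_ereal_def)
  qed
  have tau_eq: "\<And>s. tau act H z (F s / 2) = - s"
    unfolding Defs.tau_def
    by (rule the_equality) (auto simp: Hs dest: Finj)
  have bform: "\<And>s. bfun act H z (F s / 2) = f 0 - f s + F s * s"
  proof -
    fix s
    have hh: "\<And>\<sigma>. H (act \<sigma> (act s z)) = F (\<sigma> + s) / 2"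
      by (simp add: Hs flip: act_add)
    have "(LBINT \<sigma>=ereal 0..ereal (- s). H (act \<sigma> (act s z)) - F s / 2)
        = (LBINT \<sigma>=ereal 0..ereal (- s). F (\<sigma> + s) / 2 - F s / 2)" by (simp only: hh)
    also have "\<dots> = (f (- s + s) / 2 - F s / 2 * (- s)) - f s / 2" by (rule integ)
    finally show "bfun act H z (F s / 2) = f 0 - f s + F s * s"
      unfolding bfun_def Let_def tau_eq by (simp add: algebra_simps)
  qed
  define B where "B = (\<lambda>e. f 0 - f (g (2 * e)) + 2 * e * g (2 * e))"
  have rngI: "range (\<lambda>s. H (act s z)) = range (\<lambda>s. F s / 2)" by (simp add: Hs)
  have bB: "\<And>e. 2 * e \<in> range F \<Longrightarrow> bfun act H z e = B e"
  proof -
    fix e assume "2 * e \<in> range F"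
    then obtain s where s: "2 * e = F s" by auto
    then have "e = F s / 2" by simp
    then have "bfun act H z e = f 0 - f s + F s * s" using bform[of s] by (simp only:)
    then show "bfun act H z e = B e" using s by (simp add: B_def gF)
  qed
  have nbhd: "\<And>s. open {F (s - 1) / 2 <..< F (s + 1) / 2} \<and> F s / 2 \<in> {F (s - 1) / 2 <..< F (s + 1) / 2}
      \<and> (\<forall>e\<in>{F (s - 1) / 2 <..< F (s + 1) / 2}. 2 * e \<in> range F)"
  proof -
    fix s
    show "?thesis s" using mono[of "s - 1" s] mono[of s "s + 1"]
      by (auto intro: rngF simp: mult.commute)
  qed
  have Bder: "\<And>s. (B has_real_derivative 2 * s) (at (F s / 2))"
  proof -
    fix s
    have gd: "((\<lambda>e. g (2 * e)) has_real_derivative inverse (F2 s) * 2) (at (F s / 2))"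
      by (rule gd2)
    have fd: "((\<lambda>e. f (g (2 * e))) has_real_derivative F s * (inverse (F2 s) * 2)) (at (F s / 2))"
      using DERIV_chain2[OF _ gd, of f "F s"] d1[of s] by (simp add: gF)
    have "(B has_real_derivative 0 - F s * (inverse (F2 s) * 2) + (2 * s + 2 * (F s / 2) * (inverse (F2 s) * 2))) (at (F s / 2))"
      unfolding B_def using fd gd
      by (auto intro!: derivative_eq_intros simp: gF)
    then show "(B has_real_derivative 2 * s) (at (F s / 2))" by (simp add: algebra_simps)
  qed
  have bder: "\<And>s. ((\<lambda>e. bfun act H z e) has_real_derivative 2 * s) (at (F s / 2))"
  proof -
    fix s
    show "?thesis s"
      by (rule has_field_derivative_transform_within_open[OF Bder[of s], of "{F (s - 1) / 2 <..< F (s + 1) / 2}"])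
        (use nbhd[of s] bB in auto)
  qed
  have bder': "\<And>e. 2 * e \<in> range F \<Longrightarrow> ((\<lambda>e. bfun act H z e) has_real_derivative 2 * g (2 * e)) (at e)"
  proof -
    fix e assume "2 * e \<in> range F"
    then obtain s where s: "2 * e = F s" by auto
    then have "e = F s / 2" by simp
    then show "?thesis e" using bder[of s] s gF[of s] by (simp only:)
  qed
  obtain s0 where s0: "zE = act s0 z" using zE_orbit by blast
  have E0: "E = F s0 / 2" using zE_level s0 Hs by simp
  have "act (\<tau> + s0) z = z" using tau_def s0 by (simp add: act_add)
  then have "deriv (\<lambda>r. phi (act r (act (\<tau> + s0) z))) = deriv f" by (simp add: f_def)
  then have "F (0 + (\<tau> + s0)) = F 0" using shift[of "\<tau> + s0"] F_def by metis
  then have tau0: "\<tau> = - s0" using Finj by fastforce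
  have p1: "bfun act H z E = phi z + sympot act phi (2 * E) z"
  proof -
    have "sympot act phi (2 * E) z = 2 * E * s0 - f s0"
      unfolding sympot_def
    proof (rule cSup_eq_maximum)
      show "2 * E * s0 - f s0 \<in> range (\<lambda>\<rho>. 2 * E * \<rho> - phi (act \<rho> z))" by (auto simp: f_def)
    next
      fix x assume "x \<in> range (\<lambda>\<rho>. 2 * E * \<rho> - phi (act \<rho> z))"
      then obtain r where "x = 2 * E * r - f r" by (auto simp: f_def)
      moreover have "f r \<ge> f s0 + F s0 * (r - s0)" by (rule cvx_aux[OF d1 mono])
      ultimately show "x \<le> 2 * E * s0 - f s0" using E0 by (simp add: algebra_simps)
    qed
    moreover have "phi z = f 0" by (simp add: f_def act_0)
    moreover have "bfun act H z E = f 0 - f s0 + F s0 * s0" using bform[of s0] E0 by (simp only:)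
    moreover have "2 * E = F s0" using E0 by simp
    ultimately show ?thesis by (simp only:)
  qed
  have p2: "((\<lambda>e. bfun act H z e) has_real_derivative (- 2 * \<tau>)) (at E)"
    unfolding E0 tau0 using bder[of s0] by simp
  have p3: "((\<lambda>e. deriv (\<lambda>e'. bfun act H z e') e) has_real_derivative
               (4 / rho_deriv2 act phi zE)) (at E)"
  proof -
    have gd: "((\<lambda>e. 2 * g (2 * e)) has_real_derivative 2 * (inverse (F2 s0) * 2)) (at (F s0 / 2))"
      using gd2[of s0] by (auto intro!: derivative_eq_intros)
    have "((\<lambda>e. deriv (\<lambda>e'. bfun act H z e') e) has_real_derivative 2 * (inverse (F2 s0) * 2)) (at (F s0 / 2))"
      by (rule has_field_derivative_transform_within_open[OF gd, of "{F (s0 - 1) / 2 <..< F (s0 + 1) / 2}"])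
        (use nbhd[of s0] bder' DERIV_imp_deriv in metis)+
    moreover have "rho_deriv2 act phi zE = F2 s0"
      using shift2[of s0] s0 by (simp add: rho_deriv2_def)
    ultimately show ?thesis unfolding E0 by (simp add: field_simps)
  qed
  have supp: "\<And>e m. 2 * e \<in> range F \<Longrightarrow> 2 * m \<in> range F \<Longrightarrow> e \<noteq> m \<Longrightarrow>
      bfun act H z e > bfun act H z m + 2 * (e - m) * g (2 * m)"
  proof -
    fix e m assume e: "2 * e \<in> range F" and m: "2 * m \<in> range F" and ne: "e \<noteq> m"
    have Fe: "F (g (2 * e)) = 2 * e" using Fg e by blast
    have Fm: "F (g (2 * m)) = 2 * m" using Fg m by blast
    have "g (2 * m) \<noteq> g (2 * e)" using Fe Fm ne by force
    then have "f (g (2 * m)) > f (g (2 * e)) + F (g (2 * e)) * (g (2 * m) - g (2 * e))"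
      using strict_cvx_aux[OF d1 mono, of "g (2 * m)" "g (2 * e)"] by blast
    then show "bfun act H z e > bfun act H z m + 2 * (e - m) * g (2 * m)"
      using bB[OF e] bB[OF m] Fe by (simp add: B_def algebra_simps)
  qed
  have p4: "strict_convex_on (range (\<lambda>s. H (act s z))) (\<lambda>e. bfun act H z e)"
    unfolding strict_convex_on_def rngI
  proof (intro ballI allI impI)
    fix x y t :: real assume x: "x \<in> range (\<lambda>s. F s / 2)" and y: "y \<in> range (\<lambda>s. F s / 2)"
      and xy: "x \<noteq> y" and t: "0 < t \<and> t < 1"
    define m where "m = (1 - t) * x + t * y"
    have x2: "2 * x \<in> range F" and y2: "2 * y \<in> range F" using x y by auto
    have mm: "min x y < m \<and> m < max x y"
    proof (cases "x < y")
      case True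
      have "(1 - t) * x + t * x < (1 - t) * x + t * y" "(1 - t) * x + t * y < (1 - t) * y + t * y"
        using True t by (auto intro: mult_strict_left_mono)
      then show ?thesis using True unfolding m_def by (simp add: algebra_simps)
    next
      case False
      then have yx: "y < x" using xy by simp
      have "(1 - t) * x + t * y < (1 - t) * x + t * x" "(1 - t) * y + t * y < (1 - t) * x + t * y"
        using yx t by (auto intro: mult_strict_left_mono)
      then show ?thesis using yx unfolding m_def by (simp add: algebra_simps)
    qed
    then have mx: "m \<noteq> x" and my: "m \<noteq> y" by (auto simp: min_def max_def split: if_splits)
    have "2 * m \<in> range F"
    proof -
      obtain a where a: "2 * x = F a" using x2 by auto
      obtain b where b: "2 * y = F b" using y2 by auto
      show ?thesis
      proof (cases "x < y")
        case True
        then show ?thesis using mm a b by (intro rngF[of a _ b]) (auto simp: min_def max_def)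
      next
        case False
        then show ?thesis using mm a b xy by (intro rngF[of b _ a]) (auto simp: min_def max_def)
      qed
    qed
    then have "bfun act H z x > bfun act H z m + 2 * (x - m) * g (2 * m)"
      "bfun act H z y > bfun act H z m + 2 * (y - m) * g (2 * m)"
      using supp x2 y2 mx my by auto
    then have "(1 - t) * bfun act H z x + t * bfun act H z y >
        (1 - t) * (bfun act H z m + 2 * (x - m) * g (2 * m)) + t * (bfun act H z m + 2 * (y - m) * g (2 * m))"
      using t by (intro add_strict_mono mult_strict_left_mono) auto
    moreover have "(1 - t) * (bfun act H z m + 2 * (x - m) * g (2 * m)) + t * (bfun act H z m + 2 * (y - m) * g (2 * m))
        = bfun act H z m"
      unfolding m_def by (simp add: algebra_simps)
    ultimately show "bfun act H z ((1 - t) * x + t * y) < (1 - t) * bfun act H z x + t * bfun act H z y"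
      unfolding m_def by simp
  qed
  have p5: "bfun act H z (H z) = 0"
  proof -
    have "H z = F 0 / 2" using Hs[of 0] by (simp add: act_0)
    moreover have "bfun act H z (F 0 / 2) = 0" using bform[of 0] by simp
    ultimately show ?thesis by (simp only:)
  qed
  have p6: "\<forall>e\<in>range (\<lambda>s. H (act s z)). bfun act H z e \<ge> 0"
  proof
    fix e assume "e \<in> range (\<lambda>s. H (act s z))"
    then obtain s where "e = F s / 2" by (auto simp: Hs)
    moreover have "f 0 \<ge> f s + F s * (0 - s)" by (rule cvx_aux[OF d1 mono])
    ultimately show "bfun act H z e \<ge> 0" using bform[of s] by (simp only:) simp
  qed
  show ?thesis using p1 p2 p3 p4 p5 p6 by blast
qed

end
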